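(* Let $h\ge 3$ and let $W\in\mathcal W^2_{h\times 3}$ be $2$-full. Then: (i) $W[1]=(\blacksquare,\blacksquare,\blacksquare)$ and $W[2]=(\blacksquare,\square,\blacksquare)$; (ii) if $W$ is atomic, then $|W[i]|_\blacksquare=2$ for all $1<i<h$; (iii) if $W$ is atomic, there are no $i$ with $1<i<h-1$ and $j\in\{1,2\}$ such that the four cells $(i,j),(i,j+1),(i+1,j),(i+1,j+1)$ are all filled; (iv) if $W$ is atomic, neither column $W^t[1]$ nor column $W^t[3]$ contains two vertically consecutive empty cells.
   Context: A 2-dimensional binary word of dimensions $h\times w$ is an $h\times w$ matrix $W$ with entries in $\{\square,\blacksquare\}$; entries $\blacksquare$ are filled cells, entries $\square$ empty cells, and $|U|_\blacksquare$ is the number of filled cells of $U$. Two cells $(i,j),(i',j')$ are adjacent if $|i-i'|+|j-j'|=1$; the degree of a filled cell is the number of filled cells adjacent to it. $\mathcal W^2_{h\times w}$ is the set of $h\times w$ binary words in which every filled cell has degree at most $2$; $W\in\mathcal W^2_{h\times w}$ is $2$-full if $|W|_\blacksquare$ is maximal among words of $\mathcal W^2_{h\times w}$. $W[i]$ denotes the $i$-th row of $W$ and $W^t[j]$ its $j$-th column. A word $W\in\mathcal W^2_{h\times w}$ is atomic if no row of $W$ consists only of empty cells. *)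

theory Defs
  imports Main
begin

text \<open>A 2-dimensional binary word of dimensions h x w is modelled as a function
  W :: nat => nat => bool, where W i j = True means the cell (i,j) is filled.
  Rows are indexed 1..h and columns 1..w (as in the paper); values outside this
  range are irrelevant.\<close>

type_synonym word2d = "nat \<Rightarrow> nat \<Rightarrow> bool"

definition cells :: "nat \<Rightarrow> nat \<Rightarrow> (nat \<times> nat) set" where
  "cells h w = {1..h} \<times> {1..w}"

definition adjacent :: "nat \<times> nat \<Rightarrow> nat \<times> nat \<Rightarrow> bool" where
  "adjacent c c' \<longleftrightarrow>
     \<bar>int (fst c) - int (fst c')\<bar> + \<bar>int (snd c) - int (snd c')\<bar> = 1"

definition filled_count :: "nat \<Rightarrow> nat \<Rightarrow> word2d \<Rightarrow> nat" where
  "filled_count h w W = card {c \<in> cells h w. W (fst c) (snd c)}"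

definition degree :: "nat \<Rightarrow> nat \<Rightarrow> word2d \<Rightarrow> nat \<times> nat \<Rightarrow> nat" where
  "degree h w W c = card {c' \<in> cells h w. W (fst c') (snd c') \<and> adjacent c c'}"

definition in_W2 :: "nat \<Rightarrow> nat \<Rightarrow> word2d \<Rightarrow> bool" where
  "in_W2 h w W \<longleftrightarrow> (\<forall>c \<in> cells h w. W (fst c) (snd c) \<longrightarrow> degree h w W c \<le> 2)"

definition two_full :: "nat \<Rightarrow> nat \<Rightarrow> word2d \<Rightarrow> bool" where
  "two_full h w W \<longleftrightarrow> in_W2 h w W \<and>
     (\<forall>V. in_W2 h w V \<longrightarrow> filled_count h w V \<le> filled_count h w W)"

definition atomic :: "nat \<Rightarrow> nat \<Rightarrow> word2d \<Rightarrow> bool" where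
  "atomic h w W \<longleftrightarrow> (\<forall>i \<in> {1..h}. \<exists>j \<in> {1..w}. W i j)"

definition row_count :: "nat \<Rightarrow> word2d \<Rightarrow> nat \<Rightarrow> nat" where
  "row_count w W i = card {j \<in> {1..w}. W i j}"

end

theory Submission
  imports Defs
begin

type_synonym row = "bool \<times> bool \<times> bool"

definition Zr :: row where "Zr = (False, False, False)"

fun cnt :: "row \<Rightarrow> nat" where
  "cnt (x,y,z) = of_bool x + of_bool y + of_bool z"

fun okr :: "row \<Rightarrow> row \<Rightarrow> row \<Rightarrow> bool" where
  "okr (a1,a2,a3) (b1,b2,b3) (c1,c2,c3) =
    ((b1 \<longrightarrow> of_bool a1 + of_bool c1 + of_bool b2 \<le> (2::nat)) \<and>
     (b2 \<longrightarrow> of_bool a2 + of_bool c2 + of_bool b1 + of_bool b3 \<le> (2::nat)) \<and>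
     (b3 \<longrightarrow> of_bool a3 + of_bool c3 + of_bool b2 \<le> (2::nat)))"

fun Ft :: "row \<Rightarrow> row \<Rightarrow> int" where
  "Ft (a1,a2,a3) (b1,b2,b3) = (if a1 then (if a2 then (if a3 then (if b1 then (if b2 then (if b3 then (-100) else (-100)) else (if b3 then (1) else (0))) else (if b2 then (if b3 then (-100) else (-100)) else (if b3 then (0) else (0)))) else (if b1 then (if b2 then (if b3 then (1) else (0)) else (if b3 then (1) else (0))) else (if b2 then (if b3 then (1) else (0)) else (if b3 then (0) else (-1))))) else (if a3 then (if b1 then (if b2 then (if b3 then (2) else (1)) else (if b3 then (1) else (0))) else (if b2 then (if b3 then (1) else (0)) else (if b3 then (0) else (-1)))) else (if b1 then (if b2 then (if b3 then (1) else (0)) else (if b3 then (0) else (-1))) else (if b2 then (if b3 then (0) else (-1)) else (if b3 then (-1) else (-2)))))) else (if a2 then (if a3 then (if b1 then (if b2 then (if b3 then (1) else (1)) else (if b3 then (1) else (0))) else (if b2 then (if b3 then (0) else (0)) else (if b3 then (0) else (-1)))) else (if b1 then (if b2 then (if b3 then (1) else (0)) else (if b3 then (0) else (-1))) else (if b2 then (if b3 then (0) else (-1)) else (if b3 then (-1) else (-2))))) else (if a3 then (if b1 then (if b2 then (if b3 then (1) else (0)) else (if b3 then (0) else (-1))) else (if b2 then (if b3 then (0) else (-1)) else (if b3 then (-1) else (-2)))) else (if b1 then (if b2 then (if b3 then (1) else (0)) else (if b3 then (0) else (-1))) else (if b2 then (if b3 then (0) else (-1)) else (if b3 then (-1) else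 (-2)))))))"

fun Gp :: "row \<Rightarrow> row \<Rightarrow> int" where
  "Gp (a1,a2,a3) (b1,b2,b3) = (if a1 then (if a2 then (if a3 then (if b1 then (if b2 then (if b3 then (-100) else (0)) else (if b3 then (1) else (1))) else (if b2 then (if b3 then (0) else (1)) else (if b3 then (1) else (2)))) else (if b1 then (if b2 then (if b3 then (-100) else (0)) else (if b3 then (1) else (1))) else (if b2 then (if b3 then (1) else (1)) else (if b3 then (1) else (2))))) else (if a3 then (if b1 then (if b2 then (if b3 then (0) else (1)) else (if b3 then (1) else (1))) else (if b2 then (if b3 then (1) else (1)) else (if b3 then (1) else (2)))) else (if b1 then (if b2 then (if b3 then (0) else (1)) else (if b3 then (1) else (1))) else (if b2 then (if b3 then (1) else (1)) else (if b3 then (1) else (2)))))) else (if a2 then (if a3 then (if b1 then (if b2 then (if b3 then (-100) else (1)) else (if b3 then (1) else (1))) else (if b2 then (if b3 then (0) else (1)) else (if b3 then (1) else (2)))) else (if b1 then (if b2 then (if b3 then (-100) else (1)) else (if b3 then (1) else (1))) else (if b2 then (if b3 then (1) else (1)) else (if b3 then (1) else (2))))) else (if a3 then (if b1 then (if b2 then (if b3 then (0) else (1)) else (if b3 then (1) else (1))) else (if b2 then (if b3 then (1) else (1)) else (if b3 then (1) else (2)))) else (if b1 then (if b2 then (if b3 then (1) else (1)) else (if b3 then (1) else (1))) else (if b2 then (if b3 then (1) else (1)) else (if b3 then (1) else (2)))))))"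

fun Ga :: "row \<Rightarrow> row \<Rightarrow> int" where
  "Ga (a1,a2,a3) (b1,b2,b3) = (if a1 then (if a2 then (if a3 then (if b1 then (if b2 then (if b3 then (-100) else (0)) else (if b3 then (1) else (1))) else (if b2 then (if b3 then (0) else (1)) else (if b3 then (1) else (2)))) else (if b1 then (if b2 then (if b3 then (-100) else (0)) else (if b3 then (1) else (1))) else (if b2 then (if b3 then (1) else (1)) else (if b3 then (1) else (2))))) else (if a3 then (if b1 then (if b2 then (if b3 then (0) else (1)) else (if b3 then (1) else (1))) else (if b2 then (if b3 then (1) else (1)) else (if b3 then (1) else (2)))) else (if b1 then (if b2 then (if b3 then (0) else (1)) else (if b3 then (1) else (1))) else (if b2 then (if b3 then (1) else (1)) else (if b3 then (1) else (2)))))) else (if a2 then (if a3 then (if b1 then (if b2 then (if b3 then (-100) else (1)) else (if b3 then (1) else (1))) else (if b2 then (if b3 then (0) else (1)) else (if b3 then (1) else (2)))) else (if b1 then (if b2 then (if b3 then (-100) else (1)) else (if b3 then (1) else (1))) else (if b2 then (if b3 then (1) else (1)) else (if b3 then (1) else (2))))) else (if a3 then (if b1 then (if b2 then (if b3 then (0) else (1)) else (if b3 then (1) else (1))) else (if b2 then (if b3 then (1) else (1)) else (if b3 then (1) else (2)))) else (if b1 then (if b2 then (if b3 then (1) else (1)) else (if b3 then (1) else (1))) else (if b2 then (if b3 then (1) else (1)) else (if b3 then (1) else (2)))))))"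

lemma Fstep0:
  "okr (a1,a2,a3) (b1,b2,b3) (c1,c2,c3) \<Longrightarrow>
   Ft (a1,a2,a3) (b1,b2,b3) + int (cnt (c1,c2,c3)) - 2 \<le> Ft (b1,b2,b3) (c1,c2,c3)"
  by (cases a1; cases a2; cases a3; cases b1; cases b2; cases b3; cases c1; cases c2; cases c3) simp_all

lemma Gpstep0:
  "okr (a1,a2,a3) (b1,b2,b3) (c1,c2,c3) \<Longrightarrow>
   int (cnt (c1,c2,c3)) - 2 + Gp (b1,b2,b3) (c1,c2,c3) \<le> Gp (a1,a2,a3) (b1,b2,b3)"
  by (cases a1; cases a2; cases a3; cases b1; cases b2; cases b3; cases c1; cases c2; cases c3) simp_all

lemma Gastep0:
  "okr (a1,a2,a3) (b1,b2,b3) (c1,c2,c3) \<Longrightarrow> (c1,c2,c3) \<noteq> Zr \<Longrightarrow>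
   int (cnt (c1,c2,c3)) - 2 + Ga (b1,b2,b3) (c1,c2,c3) \<le> Ga (a1,a2,a3) (b1,b2,b3)"
  by (cases a1; cases a2; cases a3; cases b1; cases b2; cases b3; cases c1; cases c2; cases c3) (simp_all add: Zr_def)

lemma F0: "int (cnt (b1,b2,b3)) \<le> 2 + Ft Zr (b1,b2,b3)"
  by (cases b1; cases b2; cases b3) (simp_all add: Zr_def)

lemma Gp0: "okr (a1,a2,a3) (b1,b2,b3) Zr \<Longrightarrow> 0 \<le> Gp (a1,a2,a3) (b1,b2,b3)"
  by (cases a1; cases a2; cases a3; cases b1; cases b2; cases b3) (simp_all add: Zr_def)

lemma Ga0: "okr (a1,a2,a3) (b1,b2,b3) Zr \<Longrightarrow> 0 \<le> Ga (a1,a2,a3) (b1,b2,b3)"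
  by (cases a1; cases a2; cases a3; cases b1; cases b2; cases b3) (simp_all add: Zr_def)

lemma C1: "4 \<le> int (cnt (b1,b2,b3)) + Gp Zr (b1,b2,b3) \<Longrightarrow> b1 \<and> b2 \<and> b3"
  by (cases b1; cases b2; cases b3) (simp_all add: Zr_def)

lemma C2: "okr Zr (True,True,True) (b1,b2,b3) \<Longrightarrow>
   6 \<le> 3 + int (cnt (b1,b2,b3)) + Gp (True,True,True) (b1,b2,b3) \<Longrightarrow> b1 \<and> \<not> b2 \<and> b3"
  by (cases b1; cases b2; cases b3) (simp_all add: Zr_def)

lemma C3: "okr (a1,a2,a3) (b1,b2,b3) (c1,c2,c3) \<Longrightarrow> (a1,a2,a3) \<noteq> Zr \<Longrightarrow>
   (b1,b2,b3) \<noteq> Zr \<Longrightarrow> (c1,c2,c3) \<noteq> Zr \<Longrightarrow>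
   4 \<le> Ft (a1,a2,a3) (b1,b2,b3) + int (cnt (c1,c2,c3)) + Ga (b1,b2,b3) (c1,c2,c3) \<Longrightarrow>
   cnt (b1,b2,b3) = 2 \<and> \<not> (a1 \<and> a2 \<and> b1 \<and> b2) \<and> \<not> (a2 \<and> a3 \<and> b2 \<and> b3)"
  by (cases a1; cases a2; cases a3; cases b1; cases b2; cases b3; cases c1; cases c2; cases c3) (simp_all add: Zr_def)

lemma C5: "(a1,a2,a3) \<noteq> Zr \<Longrightarrow> (b1,b2,b3) \<noteq> Zr \<Longrightarrow>
   2 \<le> Ft (a1,a2,a3) (b1,b2,b3) + Ga (a1,a2,a3) (b1,b2,b3) \<Longrightarrow> (a1 \<or> b1) \<and> (a3 \<or> b3)"
  by (cases a1; cases a2; cases a3; cases b1; cases b2; cases b3) (simp_all add: Zr_def)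

definition R :: "nat \<Rightarrow> word2d \<Rightarrow> nat \<Rightarrow> row" where
  "R h W i = (if 1 \<le> i \<and> i \<le> h then (W i 1, W i 2, W i 3) else Zr)"

lemma adj_iff:
  assumes "1 \<le> i" "1 \<le> j"
  shows "adjacent (i,j) c \<longleftrightarrow> c \<in> set [(i-1,j),(i+1,j),(i,j-1),(i,j+1)]"
proof (cases c)
  case (Pair a b)
  show ?thesis using assms unfolding Pair adjacent_def by auto
qed

lemma deg_eq:
  assumes "1 \<le> i" "1 \<le> j"
  shows "degree h w W (i,j) =
    length (filter (\<lambda>c. c \<in> cells h w \<and> W (fst c) (snd c)) [(i-1,j),(i+1,j),(i,j-1),(i,j+1)])"
proof -
  have d: "distinct [(i-1,j),(i+1,j),(i,j-1),(i,j+1)]" using assms by auto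
  have "{c' \<in> cells h w. W (fst c') (snd c') \<and> adjacent (i,j) c'} =
        {c. c \<in> cells h w \<and> W (fst c) (snd c)} \<inter> set [(i-1,j),(i+1,j),(i,j-1),(i,j+1)]"
    using adj_iff[OF assms] by blast
  then have "degree h w W (i,j) = card ({c. c \<in> cells h w \<and> W (fst c) (snd c)} \<inter> set [(i-1,j),(i+1,j),(i,j-1),(i,j+1)])"
    unfolding degree_def by (simp only:)
  then show ?thesis using distinct_length_filter[OF d, of "\<lambda>c. c \<in> cells h w \<and> W (fst c) (snd c)"]
    by (simp only:)
qed

lemma inW2_iff:
  "in_W2 h 3 W \<longleftrightarrow> (\<forall>i\<in>{1..h}. okr (R h W (i-1)) (R h W i) (R h W (Suc i)))"
proof -
  have "in_W2 h 3 W \<longleftrightarrow> (\<forall>i\<in>{1..h}. \<forall>j\<in>{1,2,3}. W i j \<longrightarrow> degree h 3 W (i,j) \<le> 2)"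
  proof -
    have e3: "{1..3::nat} = {1,2,3}" by auto
    show ?thesis unfolding in_W2_def cells_def e3 by auto
  qed
  also have "\<dots> \<longleftrightarrow> (\<forall>i\<in>{1..h}. okr (R h W (i-1)) (R h W i) (R h W (Suc i)))"
  proof (intro ball_cong refl)
    fix i assume i: "i \<in> {1..h}"
    show "(\<forall>j\<in>{1,2,3}. W i j \<longrightarrow> degree h 3 W (i,j) \<le> 2) = okr (R h W (i-1)) (R h W i) (R h W (Suc i))"
      using i by (cases "i = 1"; cases "i = h") (auto simp: deg_eq cells_def R_def Zr_def numeral_2_eq_2 numeral_3_eq_3)
  qed
  finally show ?thesis .
qed

lemma fc_eq: "filled_count h 3 W = (\<Sum>i=1..h. cnt (R h W i))"
proof -
  have "{c \<in> cells h 3. W (fst c) (snd c)} = Sigma {1..h} (\<lambda>i. {j \<in> {1..3}. W i j})"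
    unfolding cells_def by auto
  then have "filled_count h 3 W = (\<Sum>i=1..h. card {j \<in> {1..3}. W i j})"
    unfolding filled_count_def by (simp add: card_SigmaI)
  also have "\<dots> = (\<Sum>i=1..h. cnt (R h W i))"
  proof (rule sum.cong[OF refl])
    fix i assume "i \<in> {1..h}"
    have e: "{1..3::nat} = set [1,2,3]" by auto
    have dd: "distinct [1,2,3::nat]" by simp
    have "{j \<in> {1..3}. W i j} = {x. W i x} \<inter> set [1,2,3]" unfolding e by auto
    then have "card {j \<in> {1..3}. W i j} = length (filter (W i) [1,2,3])"
      using distinct_length_filter[OF dd, of "W i"] by (simp only:)
    then show "card {j \<in> {1..3}. W i j} = cnt (R h W i)" using \<open>i \<in> {1..h}\<close>
      by (simp add: R_def)
  qed
  finally show ?thesis .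
qed

lemma rc_eq: "1 \<le> i \<Longrightarrow> i \<le> h \<Longrightarrow> row_count 3 W i = cnt (R h W i)"
proof -
  assume "1 \<le> i" "i \<le> h"
  have e: "{1..3::nat} = set [1,2,3]" by auto
    have dd: "distinct [1,2,3::nat]" by simp
  have "{j \<in> {1..3}. W i j} = {x. W i x} \<inter> set [1,2,3]" unfolding e by auto
  then have "card {j \<in> {1..3}. W i j} = length (filter (W i) [1,2,3])"
    using distinct_length_filter[OF dd, of "W i"] by (simp only:)
  then show ?thesis using \<open>1 \<le> i\<close> \<open>i \<le> h\<close> by (simp add: R_def row_count_def)
qed

lemma Fstep: "okr a b c \<Longrightarrow> Ft a b + int (cnt c) - 2 \<le> Ft b c"
  by (cases a rule: prod_cases3; cases b rule: prod_cases3; cases c rule: prod_cases3) (metis Fstep0)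

lemma Gpstep: "okr a b c \<Longrightarrow> int (cnt c) - 2 + Gp b c \<le> Gp a b"
  by (cases a rule: prod_cases3; cases b rule: prod_cases3; cases c rule: prod_cases3) (metis Gpstep0)

lemma Gastep: "okr a b c \<Longrightarrow> c \<noteq> Zr \<Longrightarrow> int (cnt c) - 2 + Ga b c \<le> Ga a b"
  by (cases a rule: prod_cases3; cases b rule: prod_cases3; cases c rule: prod_cases3) (metis Gastep0)

lemma F0': "int (cnt b) \<le> 2 + Ft Zr b"
  by (cases b rule: prod_cases3) (metis F0)

lemma Gp0': "okr a b Zr \<Longrightarrow> 0 \<le> Gp a b"
  by (cases a rule: prod_cases3; cases b rule: prod_cases3) (metis Gp0)

lemma Ga0': "okr a b Zr \<Longrightarrow> 0 \<le> Ga a b"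
  by (cases a rule: prod_cases3; cases b rule: prod_cases3) (metis Ga0)

lemma C1': "4 \<le> int (cnt b) + Gp Zr b \<Longrightarrow> b = (True,True,True)"
  by (cases b rule: prod_cases3) (metis C1)

lemma C2': "okr Zr (True,True,True) b \<Longrightarrow> 6 \<le> 3 + int (cnt b) + Gp (True,True,True) b \<Longrightarrow>
   b = (True,False,True)"
  by (cases b rule: prod_cases3) (metis C2)

lemma C3': "okr a b c \<Longrightarrow> a \<noteq> Zr \<Longrightarrow> b \<noteq> Zr \<Longrightarrow> c \<noteq> Zr \<Longrightarrow>
   4 \<le> Ft a b + int (cnt c) + Ga b c \<Longrightarrow>
   cnt b = 2 \<and> \<not> (fst a \<and> fst (snd a) \<and> fst b \<and> fst (snd b))
     \<and> \<not> (fst (snd a) \<and> snd (snd a) \<and> fst (snd b) \<and> snd (snd b))"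
  by (cases a rule: prod_cases3; cases b rule: prod_cases3; cases c rule: prod_cases3)
     (simp only: fst_conv snd_conv, metis C3)

lemma C5': "a \<noteq> Zr \<Longrightarrow> b \<noteq> Zr \<Longrightarrow> 2 \<le> Ft a b + Ga a b \<Longrightarrow>
   (fst a \<or> fst b) \<and> (snd (snd a) \<or> snd (snd b))"
  by (cases a rule: prod_cases3; cases b rule: prod_cases3)
     (simp only: fst_conv snd_conv, metis C5)

lemma Fbound:
  assumes "r 0 = Zr" "\<forall>i. 1 \<le> i \<and> i < n \<longrightarrow> okr (r (i-1)) (r i) (r (Suc i))" "1 \<le> n"
  shows "int (\<Sum>i=1..n. cnt (r i)) \<le> 2 * int n + Ft (r (n-1)) (r n)"
  using assms
proof (induction n)
  case 0
  then show ?case by simp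
next
  case (Suc n)
  show ?case
  proof (cases "n = 0")
    case True
    then show ?thesis using F0'[of "r 1"] Suc.prems(1) by simp
  next
    case False
    have IH: "int (\<Sum>i=1..n. cnt (r i)) \<le> 2 * int n + Ft (r (n-1)) (r n)"
      using Suc.IH Suc.prems False by auto
    have ok: "okr (r (n-1)) (r n) (r (Suc n))" using Suc.prems(2) False by auto
    have s: "(\<Sum>i=1..Suc n. cnt (r i)) = (\<Sum>i=1..n. cnt (r i)) + cnt (r (Suc n))"
      by simp
    show ?thesis using IH Fstep[OF ok] s by simp
  qed
qed

lemma Gpbound:
  assumes "r (Suc h) = Zr" "\<forall>i. n \<le> i \<and> i \<le> h \<longrightarrow> okr (r (i-1)) (r i) (r (Suc i))"
    "1 \<le> n" "n \<le> h"
  shows "int (\<Sum>i=Suc n..h. cnt (r i)) \<le> 2 * int (h - n) + Gp (r (n-1)) (r n)"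
  using assms
proof (induction "h - n" arbitrary: n)
  case 0
  then have "n = h" by simp
  then show ?case using Gp0'[of "r (h-1)" "r h"] 0 by auto
next
  case (Suc k)
  have IH: "int (\<Sum>i=Suc (Suc n)..h. cnt (r i)) \<le> 2 * int (h - Suc n) + Gp (r n) (r (Suc n))"
    using Suc.hyps(1)[of "Suc n"] Suc.hyps(2) Suc.prems by auto
  have ok: "okr (r (n-1)) (r n) (r (Suc n))" using Suc.prems by auto
  have s: "(\<Sum>i=Suc n..h. cnt (r i)) = cnt (r (Suc n)) + (\<Sum>i=Suc (Suc n)..h. cnt (r i))"
    using Suc.hyps(2) by (simp add: sum.atLeast_Suc_atMost)
  have "int (h - n) = int (h - Suc n) + 1" using Suc.hyps(2) by simp
  then show ?case using IH Gpstep[OF ok] s by simp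
qed

lemma Gabound:
  assumes "r (Suc h) = Zr" "\<forall>i. n \<le> i \<and> i \<le> h \<longrightarrow> okr (r (i-1)) (r i) (r (Suc i))"
    "\<forall>i. n < i \<and> i \<le> h \<longrightarrow> r i \<noteq> Zr" "1 \<le> n" "n \<le> h"
  shows "int (\<Sum>i=Suc n..h. cnt (r i)) \<le> 2 * int (h - n) + Ga (r (n-1)) (r n)"
  using assms
proof (induction "h - n" arbitrary: n)
  case 0
  then have "n = h" by simp
  then show ?case using Ga0'[of "r (h-1)" "r h"] 0 by auto
next
  case (Suc k)
  have IH: "int (\<Sum>i=Suc (Suc n)..h. cnt (r i)) \<le> 2 * int (h - Suc n) + Ga (r n) (r (Suc n))"
    using Suc.hyps(1)[of "Suc n"] Suc.hyps(2) Suc.prems by auto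
  have ok: "okr (r (n-1)) (r n) (r (Suc n))" using Suc.prems by auto
  have nz: "r (Suc n) \<noteq> Zr" using Suc.prems Suc.hyps(2) by auto
  have s: "(\<Sum>i=Suc n..h. cnt (r i)) = cnt (r (Suc n)) + (\<Sum>i=Suc (Suc n)..h. cnt (r i))"
    using Suc.hyps(2) by (simp add: sum.atLeast_Suc_atMost)
  have "int (h - n) = int (h - Suc n) + 1" using Suc.hyps(2) by simp
  then show ?case using IH Gastep[OF ok nz] s by simp
qed

lemma sum_split:
  assumes "n \<le> h"
  shows "(\<Sum>i=1..h. f i) = (\<Sum>i=1..n. f i) + (\<Sum>i=Suc n..h. (f i :: nat))"
proof -
  have "{1..h} = {1..n} \<union> {Suc n..h}" using assms by auto
  then show ?thesis by (simp add: sum.union_disjoint)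
qed

theorem mainTheorem4:
  fixes h :: nat and W :: word2d
  assumes "h \<ge> 3" and "two_full h 3 W"
  shows "((W 1 1 \<and> W 1 2 \<and> W 1 3) \<and> (W 2 1 \<and> \<not> W 2 2 \<and> W 2 3))
       \<and> (atomic h 3 W \<longrightarrow> (\<forall>i. 1 < i \<and> i < h \<longrightarrow> row_count 3 W i = 2))
       \<and> (atomic h 3 W \<longrightarrow> \<not> (\<exists>i j. 1 < i \<and> i < h - 1 \<and> j \<in> {1, 2} \<and>
             W i j \<and> W i (j + 1) \<and> W (i + 1) j \<and> W (i + 1) (j + 1)))
       \<and> (atomic h 3 W \<longrightarrow> (\<forall>j \<in> {1, 3}.
             \<not> (\<exists>i. 1 \<le> i \<and> i + 1 \<le> h \<and> \<not> W i j \<and> \<not> W (i + 1) j)))"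
proof -
  define r where "r = R h W"
  have r0: "r 0 = Zr" and rH: "r (Suc h) = Zr" unfolding r_def R_def by auto
  have rI: "\<And>i. 1 \<le> i \<Longrightarrow> i \<le> h \<Longrightarrow> r i = (W i 1, W i 2, W i 3)"
    unfolding r_def R_def by auto
  have inW: "in_W2 h 3 W" using assms(2) unfolding two_full_def by auto
  have okall: "\<forall>i. 1 \<le> i \<and> i \<le> h \<longrightarrow> okr (r (i-1)) (r i) (r (Suc i))"
    using inW unfolding inW2_iff r_def by auto
  define V :: word2d where "V = (\<lambda>i j. j \<noteq> 2 \<or> i = 1 \<or> i = h)"
  have RV: "\<And>i. R h V i = (if 1 \<le> i \<and> i \<le> h then (True, i = 1 \<or> i = h, True) else Zr)"
    unfolding R_def V_def by auto
  have inV: "in_W2 h 3 V"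
    unfolding inW2_iff
  proof
    fix i assume i: "i \<in> {1..h}"
    show "okr (R h V (i-1)) (R h V i) (R h V (Suc i))"
      using i assms(1) unfolding RV by (auto simp: Zr_def)
  qed
  have "filled_count h 3 V = (\<Sum>i=1..h. cnt (R h V i))" by (rule fc_eq)
  also have "\<dots> = (\<Sum>i=1..h. 2 + ((if i = 1 then 1 else 0) + (if i = h then 1 else 0)))"
    using assms(1) by (intro sum.cong) (auto simp: RV)
  also have "\<dots> = (\<Sum>i=1..h. 2) + ((\<Sum>i=1..h. if i = 1 then 1 else 0) + (\<Sum>i=1..h. if i = h then 1 else 0))"
    by (simp only: sum.distrib)
  also have "\<dots> = 2 * h + 2"
    using assms(1) by (simp add: sum.delta)
  finally have fV: "filled_count h 3 V = 2 * h + 2" .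
  define T where "T = (\<Sum>i=1..h. cnt (r i))"
  have Tge: "2 * int h + 2 \<le> int T"
  proof -
    have "filled_count h 3 V \<le> filled_count h 3 W" using assms(2) inV unfolding two_full_def by auto
    then show ?thesis unfolding T_def r_def fc_eq[of h W, symmetric] using fV by simp
  qed
  have sp1: "T = cnt (r 1) + (\<Sum>i=Suc 1..h. cnt (r i))"
    unfolding T_def using sum_split[of 1 h "\<lambda>i. cnt (r i)"] assms(1) by simp
  have g1: "int (\<Sum>i=Suc 1..h. cnt (r i)) \<le> 2 * int (h - 1) + Gp (r 0) (r 1)"
    using Gpbound[of r h 1] rH okall assms(1) by auto
  have "int (h - 1) = int h - 1" using assms(1) by simp
  then have "4 \<le> int (cnt (r 1)) + Gp Zr (r 1)" using sp1 g1 Tge r0 by simp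
  then have r1: "r 1 = (True,True,True)" by (rule C1')
  have sp2: "T = cnt (r 1) + cnt (r 2) + (\<Sum>i=Suc 2..h. cnt (r i))"
  proof -
    have "T = (\<Sum>i=1..2. cnt (r i)) + (\<Sum>i=Suc 2..h. cnt (r i))"
      unfolding T_def using sum_split[of 2 h "\<lambda>i. cnt (r i)"] assms(1) by simp
    moreover have "(\<Sum>i=1..2. cnt (r i)) = cnt (r 1) + cnt (r 2)"
      by (simp add: numeral_2_eq_2)
    ultimately show ?thesis by simp
  qed
  have g2: "int (\<Sum>i=Suc 2..h. cnt (r i)) \<le> 2 * int (h - 2) + Gp (r (2-1)) (r 2)"
    using Gpbound[of r h 2] rH okall assms(1) by auto
  have ok1: "okr (r 0) (r 1) (r 2)" using okall[rule_format, of 1] assms(1) by (simp add: numeral_2_eq_2)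
  have "int (h - 2) = int h - 2" using assms(1) by simp
  then have "6 \<le> 3 + int (cnt (r 2)) + Gp (True,True,True) (r 2)"
    using sp2 g2 Tge r1 by simp
  then have r2: "r 2 = (True,False,True)" using C2' ok1 r0 r1 by simp
  have partI: "(W 1 1 \<and> W 1 2 \<and> W 1 3) \<and> (W 2 1 \<and> \<not> W 2 2 \<and> W 2 3)"
    using r1 r2 rI[of 1] rI[of 2] assms(1) by simp
  have key3: "4 \<le> Ft (r (n-1)) (r n) + int (cnt (r (Suc n))) + Ga (r n) (r (Suc n))"
    if at: "\<forall>i. 1 \<le> i \<and> i \<le> h \<longrightarrow> r i \<noteq> Zr" and n: "1 \<le> n" "Suc n \<le> h" for n
  proof -
    have f: "int (\<Sum>i=1..n. cnt (r i)) \<le> 2 * int n + Ft (r (n-1)) (r n)"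
      using Fbound[of r n] r0 okall n by auto
    have g: "int (\<Sum>i=Suc (Suc n)..h. cnt (r i)) \<le> 2 * int (h - Suc n) + Ga (r n) (r (Suc n))"
      using Gabound[of r h "Suc n"] rH okall at n by auto
    have s: "T = (\<Sum>i=1..n. cnt (r i)) + cnt (r (Suc n)) + (\<Sum>i=Suc (Suc n)..h. cnt (r i))"
      unfolding T_def using sum_split[of n h "\<lambda>i. cnt (r i)"] n
      by (simp add: sum.atLeast_Suc_atMost)
    have "int (h - Suc n) = int h - int n - 1" using n by simp
    then show ?thesis using f g s Tge by simp
  qed
  have key4: "2 \<le> Ft (r (n-1)) (r n) + Ga (r (n-1)) (r n)"
    if at: "\<forall>i. 1 \<le> i \<and> i \<le> h \<longrightarrow> r i \<noteq> Zr" and n: "1 \<le> n" "n \<le> h" for n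
  proof -
    have f: "int (\<Sum>i=1..n. cnt (r i)) \<le> 2 * int n + Ft (r (n-1)) (r n)"
      using Fbound[of r n] r0 okall n by auto
    have g: "int (\<Sum>i=Suc n..h. cnt (r i)) \<le> 2 * int (h - n) + Ga (r (n-1)) (r n)"
      using Gabound[of r h n] rH okall at n by auto
    have s: "T = (\<Sum>i=1..n. cnt (r i)) + (\<Sum>i=Suc n..h. cnt (r i))"
      unfolding T_def using sum_split[of n h "\<lambda>i. cnt (r i)"] n by simp
    have "int (h - n) = int h - int n" using n by simp
    then show ?thesis using f g s Tge by simp
  qed
  have atr: "\<forall>i. 1 \<le> i \<and> i \<le> h \<longrightarrow> r i \<noteq> Zr" if A: "atomic h 3 W"
  proof (intro allI impI)
    fix i assume i: "1 \<le> i \<and> i \<le> h"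
    then obtain j where "j \<in> {1..3}" "W i j" using A i unfolding atomic_def by fastforce
    then have "j = 1 \<or> j = 2 \<or> j = 3" by auto
    then show "r i \<noteq> Zr" using rI[of i] i \<open>W i j\<close> by (auto simp: Zr_def)
  qed
  have partII: "\<forall>i. 1 < i \<and> i < h \<longrightarrow> row_count 3 W i = 2" if "atomic h 3 W"
  proof (intro allI impI)
    fix i assume i: "1 < i \<and> i < h"
    have k: "4 \<le> Ft (r (i-1)) (r i) + int (cnt (r (Suc i))) + Ga (r i) (r (Suc i))"
      using key3[OF atr[OF that], of i] i by auto
    have ok: "okr (r (i-1)) (r i) (r (Suc i))" using okall i by auto
    have "1 \<le> i - 1 \<and> i - 1 \<le> h" using i by auto
    have nz: "r (i-1) \<noteq> Zr" "r i \<noteq> Zr" "r (Suc i) \<noteq> Zr"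
      using atr[OF that, rule_format, of "i-1"] \<open>1 \<le> i - 1 \<and> i - 1 \<le> h\<close> atr[OF that, rule_format, of i]
        atr[OF that, rule_format, of "Suc i"] i by auto
    have "cnt (r i) = 2" using C3'[OF ok nz k] by simp
    then show "row_count 3 W i = 2" using rc_eq[of i h W] i unfolding r_def by simp
  qed
  have partIII: "\<not> (\<exists>i j. 1 < i \<and> i < h - 1 \<and> j \<in> {1, 2} \<and>
             W i j \<and> W i (j + 1) \<and> W (i + 1) j \<and> W (i + 1) (j + 1))" if "atomic h 3 W"
  proof
    assume "\<exists>i j. 1 < i \<and> i < h - 1 \<and> j \<in> {1, 2} \<and>
             W i j \<and> W i (j + 1) \<and> W (i + 1) j \<and> W (i + 1) (j + 1)"
    then obtain i j where ij: "1 < i" "i < h - 1" "j \<in> {1, 2}"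
      "W i j" "W i (j + 1)" "W (i + 1) j" "W (i + 1) (j + 1)" by blast
    have k: "4 \<le> Ft (r (Suc i - 1)) (r (Suc i)) + int (cnt (r (Suc (Suc i)))) + Ga (r (Suc i)) (r (Suc (Suc i)))"
      using key3[OF atr[OF that], of "Suc i"] ij by auto
    have ij2: "1 \<le> Suc i \<and> Suc i \<le> h" "1 \<le> Suc (Suc i) \<and> Suc (Suc i) \<le> h" "1 \<le> i \<and> i \<le> h"
      using ij by auto
    have ok: "okr (r (Suc i - 1)) (r (Suc i)) (r (Suc (Suc i)))" using okall[rule_format, OF ij2(1)] by simp
    have nz: "r (Suc i - 1) \<noteq> Zr" "r (Suc i) \<noteq> Zr" "r (Suc (Suc i)) \<noteq> Zr"
      using atr[OF that, rule_format, OF ij2(1)] atr[OF that, rule_format, OF ij2(2)]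
        atr[OF that, rule_format, OF ij2(3)] by auto
    have c: "\<not> (W i 1 \<and> W i 2 \<and> W (Suc i) 1 \<and> W (Suc i) 2) \<and> \<not> (W i 2 \<and> W i 3 \<and> W (Suc i) 2 \<and> W (Suc i) 3)"
      using C3'[OF ok nz k] rI[of i] rI[of "Suc i"] ij by simp
    show False using c ij by (auto simp: numeral_2_eq_2 numeral_3_eq_3)
  qed
  have partIV: "\<forall>j \<in> {1, 3}. \<not> (\<exists>i. 1 \<le> i \<and> i + 1 \<le> h \<and> \<not> W i j \<and> \<not> W (i + 1) j)"
    if "atomic h 3 W"
  proof (intro ballI notI)
    fix j assume j: "j \<in> {1, 3::nat}"
    assume "\<exists>i. 1 \<le> i \<and> i + 1 \<le> h \<and> \<not> W i j \<and> \<not> W (i + 1) j"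
    then obtain i where i: "1 \<le> i" "i + 1 \<le> h" "\<not> W i j" "\<not> W (i + 1) j" by blast
    have k: "2 \<le> Ft (r (Suc i - 1)) (r (Suc i)) + Ga (r (Suc i - 1)) (r (Suc i))"
      using key4[OF atr[OF that], of "Suc i"] i by auto
    have ij2: "1 \<le> Suc i \<and> Suc i \<le> h" "1 \<le> i \<and> i \<le> h" using i by auto
    have nz: "r (Suc i - 1) \<noteq> Zr" "r (Suc i) \<noteq> Zr"
      using atr[OF that, rule_format, OF ij2(1)] atr[OF that, rule_format, OF ij2(2)] by auto
    have c: "(W i 1 \<or> W (Suc i) 1) \<and> (W i 3 \<or> W (Suc i) 3)"
      using C5'[OF nz k] rI[of i] rI[of "Suc i"] i by simp
    show False using c i j by auto
  qed
  show ?thesis using partI partII partIII partIV by blast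
qed

end
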